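(* Let $r\in\mathbb N$, $n\ge r$, and let $a_1,\dots,a_n\in[0,1]$ satisfy $\sum_{j=1}^na_j=1$ and $\sum_{j=1}^na_j^2\le(2^r r!)^{-1}$. Then, with $\epsilon:=(2\,r!)^{-1}$, $$\prod_{j=1}^n(1+a_jx^2)\ge\epsilon\,x^{2r}\qquad\text{for every }x>0 .$$ Consequently, for any $\lambda>0$, $q>0$, setting $\Psi(\rho):=\prod_{j=1}^n\big(\lambda^2/(\lambda^2+\rho^2a_j)\big)^q$, one has $$\int_x^{+\infty}\Psi^s(\rho)\rho^m\,d\rho\le\frac{1}{2rqs-m-1}\Big(\frac{\lambda^{2r}}{\epsilon}\Big)^{qs}x^{-2rqs+m+1}$$ for every $x>0$, $s>0$ and $m<2rqs-1$.
   Context: In the paper this is applied with $a_j=\pi_{j,\nu}^2$ (nonnegative numbers summing to one), on the event where $\nu>r$ and $\sum_j\pi_{j,\nu}^4<(2^rr!)^{-1}$. *)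

theory Defs
  imports "HOL-Analysis.Analysis"
begin

definition Psi :: "(nat \<Rightarrow> real) \<Rightarrow> nat \<Rightarrow> real \<Rightarrow> real \<Rightarrow> real \<Rightarrow> real" where
  "Psi a n lam q \<rho> = (\<Prod>j=1..n. (lam^2 / (lam^2 + \<rho>^2 * a j)) powr q)"

end

theory Submission
  imports Defs
begin

fun es :: "(nat \<Rightarrow> real) \<Rightarrow> nat \<Rightarrow> nat \<Rightarrow> real" where
  "es a k 0 = (if k = 1 then 1 else 0)"
| "es a 0 (Suc m) = 0"
| "es a (Suc k) (Suc m) = es a (Suc k) m + a (Suc m) * es a k m"

lemma es_zero[simp]: "es a 0 m = 0" by (cases m) auto

lemma es_Suc: "es a k (Suc m) = es a k m + a (Suc m) * es a (k - 1) m"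
  by (cases k) auto

lemma es_one[simp]: "es a 1 m = 1" by (induction m) (auto simp: es_Suc)
lemma es_one'[simp]: "es a (Suc 0) m = 1" using es_one[of a m] by simp

declare es.simps(2,3)[simp del]

lemma es_nonneg: "(\<And>j. 1 \<le> j \<Longrightarrow> j \<le> m \<Longrightarrow> 0 \<le> a j) \<Longrightarrow> 0 \<le> es a k m"
proof (induction m arbitrary: k)
  case 0 then show ?case by simp
next
  case (Suc m)
  have "0 \<le> es a k m" "0 \<le> es a (k-1) m" using Suc by auto
  moreover have "0 \<le> a (Suc m)" using Suc by auto
  ultimately show ?case by (simp add: es_Suc)
qed

lemma es_upper:
  assumes "\<And>j. 1 \<le> j \<Longrightarrow> j \<le> m \<Longrightarrow> 0 \<le> a j"
  shows "real k * es a (k+1) m \<le> (\<Sum>j=1..m. a j) * es a k m"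
  using assms
proof (induction m arbitrary: k)
  case 0 then show ?case by simp
next
  case (Suc m k)
  define S where "S = (\<Sum>j=1..m. a j)"
  define \<alpha> where "\<alpha> = a (Suc m)"
  have nn: "\<And>k. 0 \<le> es a k m" using Suc.prems by (intro es_nonneg) auto
  have al: "0 \<le> \<alpha>" using Suc.prems \<alpha>_def by auto
  have IH1: "real k * es a (k+1) m \<le> S * es a k m" using Suc S_def by auto
  have IH2: "real k * es a k m \<le> S * es a (k-1) m + es a k m"
  proof (cases k)
    case 0 then show ?thesis by simp
  next
    case (Suc j)
    have "real j * es a (j+1) m \<le> S * es a j m" using Suc.IH Suc.prems S_def by auto
    then show ?thesis using Suc by (simp add: algebra_simps)
  qed
  have SS: "(\<Sum>j=1..Suc m. a j) = S + \<alpha>" by (simp add: S_def \<alpha>_def)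
  have "real k * es a (k+1) (Suc m) = real k * es a (k+1) m + \<alpha> * (real k * es a k m)"
    by (simp add: es_Suc \<alpha>_def algebra_simps)
  also have "\<dots> \<le> S * es a k m + \<alpha> * (S * es a (k-1) m + es a k m)"
    using IH1 IH2 al by (intro add_mono mult_left_mono) auto
  also have "\<dots> \<le> (S + \<alpha>) * (es a k m + \<alpha> * es a (k-1) m)"
    using al nn[of "k-1"] by (simp add: algebra_simps)
  also have "\<dots> = (\<Sum>j=1..Suc m. a j) * es a k (Suc m)"
    unfolding SS es_Suc[of a k m] \<alpha>_def ..
  finally show ?case .
qed

lemma es_lower:
  assumes "\<And>j. 1 \<le> j \<Longrightarrow> j \<le> m \<Longrightarrow> 0 \<le> a j"
  shows "real k * es a (k+1) m \<ge> (\<Sum>j=1..m. a j) * es a k m - (\<Sum>j=1..m. (a j)^2) * es a (k-1) m"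
  using assms
proof (induction m arbitrary: k)
  case 0 then show ?case by simp
next
  case (Suc m k)
  define S where "S = (\<Sum>j=1..m. a j)"
  define P where "P = (\<Sum>j=1..m. (a j)^2)"
  define \<alpha> where "\<alpha> = a (Suc m)"
  have nn: "\<And>k. 0 \<le> es a k m" using Suc.prems by (intro es_nonneg) auto
  have al: "0 \<le> \<alpha>" using Suc.prems \<alpha>_def by auto
  have SS: "(\<Sum>j=1..Suc m. a j) = S + \<alpha>" by (simp add: S_def \<alpha>_def)
  have PP: "(\<Sum>j=1..Suc m. (a j)^2) = P + \<alpha>^2" by (simp add: P_def \<alpha>_def)
  show ?case
  proof (cases k)
    case 0 then show ?thesis by simp
  next
    case (Suc j)
    have IH1: "real (j+1) * es a (j+2) m \<ge> S * es a (j+1) m - P * es a j m"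
      using Suc.IH[of "j+1"] Suc.prems S_def P_def by auto
    have IH2: "real j * es a (j+1) m \<ge> S * es a j m - P * es a (j-1) m"
      using Suc.IH[of j] Suc.prems S_def P_def by auto
    have e1: "es a (j+2) (Suc m) = es a (j+2) m + \<alpha> * es a (j+1) m" by (simp add: es_Suc \<alpha>_def)
    have e2: "es a (j+1) (Suc m) = es a (j+1) m + \<alpha> * es a j m" by (simp add: es_Suc \<alpha>_def)
    have e3: "es a j (Suc m) = es a j m + \<alpha> * es a (j-1) m" by (simp add: es_Suc \<alpha>_def)
    have "real (j+1) * es a (j+2) (Suc m) = real (j+1) * es a (j+2) m + \<alpha> * (real j * es a (j+1) m) + \<alpha> * es a (j+1) m"
      unfolding e1 by (simp add: algebra_simps)
    also have "\<dots> \<ge> (S * es a (j+1) m - P * es a j m) + \<alpha> * (S * es a j m - P * es a (j-1) m) + \<alpha> * es a (j+1) m"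
      using IH1 IH2 al by (intro add_mono mult_left_mono) auto
    finally have L: "real (j+1) * es a (j+2) (Suc m) \<ge> (S * es a (j+1) m - P * es a j m) + \<alpha> * (S * es a j m - P * es a (j-1) m) + \<alpha> * es a (j+1) m" .
    have "(S + \<alpha>) * es a (j+1) (Suc m) - (P + \<alpha>^2) * es a j (Suc m)
        = (S * es a (j+1) m - P * es a j m) + \<alpha> * (S * es a j m - P * es a (j-1) m) + \<alpha> * es a (j+1) m
          - \<alpha>^3 * es a (j-1) m"
      unfolding e2 e3 by (simp add: algebra_simps power2_eq_square power3_eq_cube)
    also have "\<dots> \<le> (S * es a (j+1) m - P * es a j m) + \<alpha> * (S * es a j m - P * es a (j-1) m) + \<alpha> * es a (j+1) m"
      using al nn[of "j-1"] by simp
    finally show ?thesis using L Suc SS PP by (simp add: add.commute)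
  qed
qed

lemma es_fact_bounds:
  assumes "\<And>j. 1 \<le> j \<Longrightarrow> j \<le> n \<Longrightarrow> 0 \<le> a j" and "(\<Sum>j=1..n. a j) = 1"
  shows "fact k * es a (k+1) n \<le> 1 \<and>
         fact k * es a (k+1) n \<ge> 1 - (\<Sum>j=1..n. (a j)^2) * (real k * (real k - 1) / 2)"
proof (induction k)
  case 0 then show ?case by (simp add: sum_nonneg)
next
  case (Suc k)
  define p where "p = (\<Sum>j=1..n. (a j)^2)"
  have p0: "0 \<le> p" unfolding p_def by (intro sum_nonneg) auto
  have U: "real (k+1) * es a (k+2) n \<le> es a (k+1) n"
    using es_upper[where m=n and a=a and k="k+1"] assms by simp
  have L: "real (k+1) * es a (k+2) n \<ge> es a (k+1) n - p * es a k n"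
    using es_lower[where m=n and a=a and k="k+1"] assms p_def by simp
  have fk: "fact (Suc k) * es a (Suc k + 1) n = fact k * (real (k+1) * es a (k+2) n)"
    by (simp add: algebra_simps)
  have fk0: "(0::real) \<le> fact k" by simp
  have A: "fact k * es a k n \<le> real k"
  proof (cases k)
    case 0 then show ?thesis by simp
  next
    case (Suc j)
    have "fact j * es a (j+1) n \<le> 1"
    proof -
      have "\<And>i. fact i * es a (i+1) n \<le> 1"
      proof -
        fix i show "fact i * es a (i+1) n \<le> 1"
        proof (induction i)
          case 0 then show ?case by simp
        next
          case (Suc i)
          have U': "real (i+1) * es a (i+2) n \<le> es a (i+1) n"
            using es_upper[where m=n and a=a and k="i+1"] assms by simp
          have "fact (Suc i) * es a (Suc i + 1) n = fact i * (real (i+1) * es a (i+2) n)"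
            by (simp add: algebra_simps)
          also have "\<dots> \<le> fact i * es a (i+1) n" by (intro mult_left_mono U') simp
          finally show ?case using Suc.IH by linarith
        qed
      qed
      then show ?thesis by blast
    qed
    then have "real (Suc j) * (fact j * es a (j+1) n) \<le> real (Suc j)"
      by (simp add: mult_left_le)
    then show ?thesis using Suc by (simp add: algebra_simps)
  qed
  have up: "fact (Suc k) * es a (Suc k + 1) n \<le> 1"
  proof -
    have "fact (Suc k) * es a (Suc k + 1) n \<le> fact k * es a (k+1) n"
      unfolding fk by (intro mult_left_mono U fk0)
    then show ?thesis using Suc.IH by linarith
  qed
  have "fact (Suc k) * es a (Suc k + 1) n \<ge> fact k * (es a (k+1) n - p * es a k n)"
    unfolding fk by (intro mult_left_mono L fk0)
  also have "fact k * (es a (k+1) n - p * es a k n) = fact k * es a (k+1) n - p * (fact k * es a k n)"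
    by (simp add: algebra_simps)
  also have "\<dots> \<ge> (1 - p * (real k * (real k - 1) / 2)) - p * real k"
    using Suc.IH p_def A p0 by (intro diff_mono mult_left_mono) auto
  also have "(1 - p * (real k * (real k - 1) / 2)) - p * real k = 1 - p * (real (Suc k) * (real (Suc k) - 1) / 2)"
    by (simp add: algebra_simps add_divide_distrib diff_divide_distrib)
  finally have lo: "fact (Suc k) * es a (Suc k + 1) n \<ge> 1 - p * (real (Suc k) * (real (Suc k) - 1) / 2)" .
  show ?case using up lo p_def by simp
qed

lemma prod_ge_es:
  assumes "\<And>j. 1 \<le> j \<Longrightarrow> j \<le> m \<Longrightarrow> 0 \<le> a j" and t: "0 \<le> t"
  shows "(\<Prod>j=1..m. 1 + a j * t) \<ge> es a (k+1) m * t^k"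
  using assms(1)
proof (induction m arbitrary: k)
  case 0 then show ?case by simp
next
  case (Suc m k)
  define P where "P = (\<Prod>j=1..m. 1 + a j * t)"
  define \<alpha> where "\<alpha> = a (Suc m)"
  have al: "0 \<le> \<alpha>" using Suc.prems \<alpha>_def by auto
  have P0: "0 \<le> P" unfolding P_def using Suc.prems t by (intro prod_nonneg) auto
  have IH: "\<And>k. P \<ge> es a (k+1) m * t^k" using Suc P_def by auto
  have PS: "(\<Prod>j=1..Suc m. 1 + a j * t) = P + \<alpha> * (t * P)"
    by (simp add: P_def \<alpha>_def prod.nat_ivl_Suc' algebra_simps)
  have B: "t * P \<ge> es a k m * t^k"
  proof (cases k)
    case 0 then show ?thesis using t P0 by simp
  next
    case (Suc j)
    have "t * P \<ge> t * (es a (j+1) m * t^j)" using IH[of j] t by (intro mult_left_mono) auto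
    then show ?thesis using Suc by (simp add: algebra_simps)
  qed
  have "es a (k+1) (Suc m) * t^k = es a (k+1) m * t^k + \<alpha> * (es a k m * t^k)"
    by (simp add: es_Suc \<alpha>_def algebra_simps)
  also have "\<dots> \<le> P + \<alpha> * (t * P)" using IH B al by (intro add_mono mult_left_mono) auto
  finally show ?case using PS by simp
qed

lemma fact_ge_sq: "n * (n - 1) \<le> fact n"
proof (cases n)
  case 0 then show ?thesis by simp
next
  case (Suc j) note nj = Suc
  show ?thesis
  proof (cases j)
    case 0 then show ?thesis using nj by simp
  next
    case (Suc i)
    have "fact n = n * (j * fact i)" using nj Suc by simp
    moreover have "1 \<le> (fact i :: nat)" by (simp add: Suc_leI)
    then have "n * j \<le> n * (j * fact i)" by simp
    ultimately show ?thesis using nj Suc by simp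
  qed
qed

lemma part1:
  fixes r n :: nat and a :: "nat \<Rightarrow> real"
  assumes "\<And>j. j \<in> {1..n} \<Longrightarrow> 0 \<le> a j \<and> a j \<le> 1"
    and "(\<Sum>j=1..n. a j) = 1"
    and "(\<Sum>j=1..n. (a j)^2) \<le> 1 / (2^r * fact r)"
    and "t \<ge> 0"
  shows "(\<Prod>j=1..n. 1 + a j * t) \<ge> (1 / (2 * fact r)) * t^r"
proof -
  have nn: "\<And>j. 1 \<le> j \<Longrightarrow> j \<le> n \<Longrightarrow> 0 \<le> a j" using assms(1) by auto
  define p where "p = (\<Sum>j=1..n. (a j)^2)"
  have p0: "0 \<le> p" unfolding p_def by (intro sum_nonneg) auto
  have "real (r * (r - 1)) \<le> fact r" using fact_ge_sq[of r] by (metis of_nat_fact of_nat_le_iff)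
  also have "(fact r :: real) \<le> 2^r * fact r" by simp
  finally have rr: "real r * (real r - 1) \<le> 2^r * fact r"
    by (cases r) (auto simp: algebra_simps)
  have rr0: "0 \<le> real r * (real r - 1)" by (cases r) auto
  have "p * (real r * (real r - 1)) \<le> (1 / (2^r * fact r)) * (2^r * fact r)"
    using assms(3) p_def p0 rr rr0 by (rule_tac mult_mono) auto
  also have "\<dots> = 1" by simp
  finally have "p * (real r * (real r - 1) / 2) \<le> 1/2" by simp
  then have "fact r * es a (r+1) n \<ge> 1/2"
    using es_fact_bounds[OF nn assms(2), of r] p_def by auto
  then have E: "es a (r+1) n \<ge> 1 / (2 * fact r)"
    by (simp add: field_simps)
  have "(1 / (2 * fact r)) * t^r \<le> es a (r+1) n * t^r"
    using E assms(4) by (intro mult_right_mono) auto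
  also have "\<dots> \<le> (\<Prod>j=1..n. 1 + a j * t)" by (rule prod_ge_es[OF nn assms(4)])
  finally show ?thesis .
qed


lemma psi_bound:
  fixes r n :: nat and a :: "nat \<Rightarrow> real"
  assumes A1: "\<And>j. j \<in> {1..n} \<Longrightarrow> 0 \<le> a j \<and> a j \<le> 1"
    and A2: "(\<Sum>j=1..n. a j) = 1"
    and A3: "(\<Sum>j=1..n. (a j)^2) \<le> 1 / (2^r * fact r)"
    and lam: "lam > 0" and q: "q > 0" and s: "s > 0" and rho: "\<rho> > 0"
  shows "Psi a n lam q \<rho> powr s \<le> (lam^(2*r) / (1 / (2 * fact r))) powr (q * s) * \<rho> powr (- (2 * real r * q * s))"
proof -
  define eps :: real where "eps = 1 / (2 * fact r)"
  have e0: "eps > 0" unfolding eps_def by simp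
  define t where "t = (\<rho> / lam)^2"
  have t0: "t > 0" unfolding t_def using rho lam by simp
  define Pr where "Pr = (\<Prod>j=1..n. 1 + a j * t)"
  have Pge: "Pr \<ge> eps * t^r" unfolding Pr_def eps_def using part1[OF A1 A2 A3] t0 by simp
  have Ppos: "0 < eps * t^r" using e0 t0 by simp
  have fac: "\<And>j. j \<in> {1..n} \<Longrightarrow> lam^2 / (lam^2 + \<rho>^2 * a j) = 1 / (1 + a j * t)"
  proof -
    fix j assume "j \<in> {1..n}"
    then have "0 \<le> a j" using A1 by auto
    then have "lam^2 + \<rho>^2 * a j > 0" using lam by (simp add: add_pos_nonneg)
    then show "lam^2 / (lam^2 + \<rho>^2 * a j) = 1 / (1 + a j * t)"
      unfolding t_def using lam by (simp add: field_simps power_divide)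
  qed
  have "Psi a n lam q \<rho> = (\<Prod>j=1..n. (1 / (1 + a j * t)) powr q)"
    unfolding Psi_def by (intro prod.cong) (auto simp: fac)
  also have "\<dots> = (\<Prod>j=1..n. 1 / (1 + a j * t)) powr q" by (rule prod_powr_distrib[symmetric])
  also have "(\<Prod>j=1..n. 1 / (1 + a j * t)) = 1 / Pr" unfolding Pr_def by (simp add: prod_dividef)
  finally have "Psi a n lam q \<rho> powr s = (1 / Pr) powr (q * s)" by (simp add: powr_powr)
  also have "\<dots> \<le> (1 / (eps * t^r)) powr (q * s)"
    using Pge Ppos q s by (intro powr_mono2 divide_left_mono) (auto intro: mult_pos_pos)
  also have "1 / (eps * t^r) = (lam^(2*r) / eps) / \<rho>^(2*r)"
    unfolding t_def using lam rho e0 by (simp add: power_divide power_mult[symmetric] field_simps)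
  also have "((lam^(2*r) / eps) / \<rho>^(2*r)) powr (q * s) = ((lam^(2*r) / eps) powr (q * s)) / ((\<rho>^(2*r)) powr (q * s))"
    using lam rho e0 by (intro powr_divide; simp)
  also have "(\<rho>^(2*r)) powr (q * s) = \<rho> powr (2 * real r * q * s)"
  proof -
    have "\<rho>^(2*r) = \<rho> powr (real (2*r))" using rho by (simp only: powr_realpow)
    then have "(\<rho>^(2*r)) powr (q * s) = \<rho> powr (real (2*r) * (q * s))" by (simp only: powr_powr)
    also have "real (2*r) * (q * s) = 2 * real r * q * s" by simp
    finally show ?thesis .
  qed
  also have "(lam^(2*r) / eps) powr (q * s) / \<rho> powr (2 * real r * q * s)
      = (lam^(2*r) / eps) powr (q * s) * \<rho> powr (- (2 * real r * q * s))"
    by (simp only: powr_minus_divide divide_inverse mult_1)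
  finally show ?thesis unfolding eps_def .
qed


lemma powr_tail:
  fixes x e :: real
  assumes "e < -1" "x > 0"
  shows "set_integrable lborel {x..} (\<lambda>\<rho>. \<rho> powr e)"
    "(LINT \<rho>:{x..}|lborel. \<rho> powr e) = -(x powr (e+1)) / (e+1)"
proof -
  have hi: "((\<lambda>\<rho>. \<rho> powr e) has_integral -(x powr (e+1)) / (e+1)) {x..}"
    by (rule has_integral_powr_to_inf[OF assms])
  have "(\<lambda>\<rho>. \<rho> powr e) absolutely_integrable_on {x..}"
    using hi by (intro nonnegative_absolutely_integrable_1) (auto simp: integrable_on_def)
  then have "integrable lebesgue (\<lambda>\<rho>. indicator {x..} \<rho> *\<^sub>R \<rho> powr e)"
    by (simp add: set_integrable_def)
  moreover have "(\<lambda>\<rho>::real. indicator {x..} \<rho> *\<^sub>R \<rho> powr e) \<in> borel_measurable lborel"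
    by measurable
  ultimately have "integrable lborel (\<lambda>\<rho>. indicator {x..} \<rho> *\<^sub>R \<rho> powr e)"
    using integrable_completion by blast
  then show si: "set_integrable lborel {x..} (\<lambda>\<rho>. \<rho> powr e)"
    by (simp add: set_integrable_def)
  show "(LINT \<rho>:{x..}|lborel. \<rho> powr e) = -(x powr (e+1)) / (e+1)"
    using set_borel_integral_eq_integral(2)[OF si] hi by (simp add: integral_unique)
qed

theorem proposition2p6:
  fixes r n :: nat and a :: "nat \<Rightarrow> real"
  assumes "n \<ge> r"
    and "\<And>j. j \<in> {1..n} \<Longrightarrow> 0 \<le> a j \<and> a j \<le> 1"
    and "(\<Sum>j=1..n. a j) = 1"
    and "(\<Sum>j=1..n. (a j)^2) \<le> 1 / (2^r * fact r)"
  shows "(\<forall>x::real. x > 0 \<longrightarrow>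
            (\<Prod>j=1..n. 1 + a j * x^2) \<ge> (1 / (2 * fact r)) * x^(2*r))
       \<and> (\<forall>lam q x s m :: real. lam > 0 \<longrightarrow> q > 0 \<longrightarrow> x > 0 \<longrightarrow> s > 0 \<longrightarrow>
            m < 2 * real r * q * s - 1 \<longrightarrow>
            set_integrable lborel {x..} (\<lambda>\<rho>. Psi a n lam q \<rho> powr s * \<rho> powr m)
          \<and> (LINT \<rho>:{x..}|lborel. Psi a n lam q \<rho> powr s * \<rho> powr m)
              \<le> 1 / (2 * real r * q * s - m - 1)
                 * (lam^(2*r) / (1 / (2 * fact r))) powr (q * s)
                 * x powr (- 2 * real r * q * s + m + 1))"
proof (intro conjI allI impI)
  fix x :: real assume "x > 0"
  then show "(\<Prod>j=1..n. 1 + a j * x^2) \<ge> (1 / (2 * fact r)) * x^(2*r)"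
    using part1[OF assms(2,3,4), of "x^2"] by (simp add: power_mult)
next
  fix lam q x s m :: real
  assume lam: "lam > 0" and q: "q > 0" and x: "x > 0" and s: "s > 0" and m: "m < 2 * real r * q * s - 1"
  define C where "C = (lam^(2*r) / (1 / (2 * fact r))) powr (q * s)"
  define e where "e = m - 2 * real r * q * s"
  have e: "e < -1" using m e_def by simp
  note T = powr_tail[OF e x]
  define f where "f = (\<lambda>\<rho>. Psi a n lam q \<rho> powr s * \<rho> powr m)"
  have bnd: "f \<rho> \<le> C * \<rho> powr e" if "\<rho> \<ge> x" for \<rho>
  proof -
    have rho: "\<rho> > 0" using that x by simp
    have "f \<rho> \<le> (C * \<rho> powr (- (2 * real r * q * s))) * \<rho> powr m"
      unfolding f_def C_def
      by (rule mult_right_mono[OF psi_bound[OF assms(2,3,4) lam q s rho] powr_ge_zero])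
    also have "\<dots> = C * \<rho> powr e" unfolding e_def
      by (simp add: mult.assoc powr_add[symmetric])
    finally show ?thesis .
  qed
  have f0: "\<And>\<rho>. 0 \<le> f \<rho>" unfolding f_def by simp
  have gi: "set_integrable lborel {x..} (\<lambda>\<rho>. C * \<rho> powr e)"
    using T(1) by (rule set_integrable_mult_right)
  have meas: "set_borel_measurable lborel {x..} f"
    unfolding set_borel_measurable_def f_def Psi_def by measurable
  have fi: "set_integrable lborel {x..} f"
  proof (rule set_integrable_bound[OF gi meas])
    show "AE \<rho> in lborel. \<rho> \<in> {x..} \<longrightarrow> norm (f \<rho>) \<le> norm (C * \<rho> powr e)"
      using bnd f0 by (intro AE_I2) (auto simp: C_def)
  qed
  then show "set_integrable lborel {x..} (\<lambda>\<rho>. Psi a n lam q \<rho> powr s * \<rho> powr m)"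
    unfolding f_def .
  have "(LINT \<rho>:{x..}|lborel. f \<rho>) \<le> (LINT \<rho>:{x..}|lborel. C * \<rho> powr e)"
    using fi gi bnd by (intro set_integral_mono) auto
  also have "\<dots> = C * (-(x powr (e+1)) / (e+1))"
    using T(2) by (simp add: set_integral_mult_right)
  also have "\<dots> = 1 / (2 * real r * q * s - m - 1) * C * x powr (- 2 * real r * q * s + m + 1)"
  proof -
    have "e + 1 = - 2 * real r * q * s + m + 1" unfolding e_def by simp
    moreover have "e + 1 \<noteq> 0" using e by simp
    ultimately show ?thesis by (simp add: field_simps e_def)
  qed
  finally show "(LINT \<rho>:{x..}|lborel. Psi a n lam q \<rho> powr s * \<rho> powr m)
              \<le> 1 / (2 * real r * q * s - m - 1)
                 * (lam^(2*r) / (1 / (2 * fact r))) powr (q * s)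
                 * x powr (- 2 * real r * q * s + m + 1)"
    unfolding f_def C_def .
qed

end
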